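(* Let $\alpha^s=\alpha^s(t,x)$ and $\beta^s=\beta^s(t,x)$, $s=1,\dots,p$, be smooth solutions of the backward heat equation ($\alpha^s_t+\alpha^s_{xx}=0$, $\beta^s_t+\beta^s_{xx}=0$) satisfying $\sum_{s=1}^p(\alpha^s_x\beta^s-\alpha^s\beta^s_x)=0$. Then for all integers $i,j\ge0$, $$\sum_{s=1}^p\bigl(\alpha^s_i\beta^s_j-\alpha^s_j\beta^s_i\bigr)=0,$$ where the subscripts $i,j$ denote the $i$-th and $j$-th order derivatives with respect to $x$. *)

theory Defs
  imports "HOL-Analysis.Analysis"
begin

definition dx :: "(real \<times> real \<Rightarrow> real) \<Rightarrow> real \<times> real \<Rightarrow> real" where
  "dx f = (\<lambda>(t, x). deriv (\<lambda>y. f (t, y)) x)"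

definition dt :: "(real \<times> real \<Rightarrow> real) \<Rightarrow> real \<times> real \<Rightarrow> real" where
  "dt f = (\<lambda>(t, x). deriv (\<lambda>s. f (s, x)) t)"

fun partials :: "bool list \<Rightarrow> (real \<times> real \<Rightarrow> real) \<Rightarrow> real \<times> real \<Rightarrow> real" where
  "partials [] f = f"
| "partials (b # bs) f = (if b then dt else dx) (partials bs f)"

definition smooth2 :: "(real \<times> real \<Rightarrow> real) \<Rightarrow> bool" where
  "smooth2 f \<longleftrightarrow> (\<forall>ops z. partials ops f differentiable (at z))"

definition dxn :: "nat \<Rightarrow> (real \<times> real \<Rightarrow> real) \<Rightarrow> real \<times> real \<Rightarrow> real" where
  "dxn i f = (dx ^^ i) f"

end

theory Submission imports Defs begin

lemma clairaut:
  fixes g gx gt gtx gxt :: "real \<times> real \<Rightarrow> real"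
  assumes gy: "\<And>t y. ((\<lambda>y. g(t,y)) has_real_derivative gx(t,y)) (at y)"
    and gt: "\<And>s y. ((\<lambda>s. g(s,y)) has_real_derivative gt(s,y)) (at s)"
    and gty: "\<And>s y. ((\<lambda>y. gt(s,y)) has_real_derivative gtx(s,y)) (at y)"
    and gxt: "\<And>s y. ((\<lambda>s. gx(s,y)) has_real_derivative gxt(s,y)) (at s)"
    and cont: "continuous_on UNIV gtx"
  shows "gxt (t0,x0) = gtx (t0,x0)"
proof -
  define a where "a = t0 - 1"
  define b where "b = t0 + 1"
  have ftc: "((\<lambda>s. gt(s,y)) has_integral (g(t,y) - g(a,y))) {a..t}" if "a \<le> t" for t y
    using that by (intro fundamental_theorem_of_calculus)
      (auto simp: has_real_derivative_iff_has_vector_derivative[symmetric]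
            intro: has_field_derivative_at_within gt)
  have cont2: "continuous_on (UNIV \<times> cbox a t) (\<lambda>(y,s). gtx(s,y))" for t
  proof -
    have "continuous_on UNIV (gtx \<circ> prod.swap)"
      by (intro continuous_on_compose continuous_intros) (auto intro: continuous_on_subset[OF cont])
    then show ?thesis
      by (rule continuous_on_subset[THEN continuous_on_eq]) (auto simp: prod.swap_def)
  qed
  have eq: "gx(t,x0) - gx(a,x0) = integral {a..t} (\<lambda>s. gtx(s,x0))" if "a \<le> t" for t
  proof -
    have "((\<lambda>y. integral (cbox a t) (\<lambda>s. gt(s,y))) has_field_derivative integral (cbox a t) (\<lambda>s. gtx(s,x0))) (at x0 within UNIV)"
      by (rule leibniz_rule_field_derivative[where f = "\<lambda>y s. gt(s,y)" and fx="\<lambda>y s. gtx(s,y)" and U=UNIV])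
        (use ftc[OF that] cont2 in \<open>auto intro: gty has_field_derivative_at_within simp: cbox_interval\<close>)
    moreover have "integral (cbox a t) (\<lambda>s. gt(s,y)) = g(t,y) - g(a,y)" for y
      using ftc[OF that] by (simp add: cbox_interval integral_unique)
    ultimately have "((\<lambda>y. g(t,y) - g(a,y)) has_real_derivative integral {a..t} (\<lambda>s. gtx(s,x0))) (at x0)"
      by (simp add: cbox_interval)
    moreover have "((\<lambda>y. g(t,y) - g(a,y)) has_real_derivative gx(t,x0) - gx(a,x0)) (at x0)"
      by (intro derivative_intros gy)
    ultimately show ?thesis by (metis DERIV_unique)
  qed
  have ab: "a < t0" "t0 < b" by (auto simp: a_def b_def)
  have "continuous_on {a..b} (\<lambda>s. gtx(s,x0))"
    by (intro continuous_on_compose2[OF cont] continuous_intros) auto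
  then have d1: "((\<lambda>t. integral {a..t} (\<lambda>s. gtx(s,x0))) has_real_derivative gtx(t0,x0)) (at t0)"
    using integral_has_real_derivative[of a b "\<lambda>s. gtx(s,x0)" t0] ab
    by (simp add: at_within_Icc_at)
  have d2: "((\<lambda>t. gx(t,x0) - gx(a,x0)) has_real_derivative gxt(t0,x0)) (at t0)"
    using DERIV_diff[OF gxt[of x0 t0] DERIV_const[of "gx(a,x0)" "at t0"]] by simp
  have d3: "((\<lambda>t. integral {a..t} (\<lambda>s. gtx(s,x0))) has_real_derivative gxt(t0,x0)) (at t0)"
    by (rule has_field_derivative_transform_within_open[OF d2, of "{a<..<b}"]) (use ab eq in auto)
  show ?thesis using d1 d3 by (metis DERIV_unique)
qed


lemma partials_append: "partials ops (partials ops' f) = partials (ops @ ops') f"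
  by (induction ops) auto

lemma dxn_0[simp]: "dxn 0 f = f" by (simp add: dxn_def)
lemma dxn_Suc: "dxn (Suc i) f = dx (dxn i f)" by (simp add: dxn_def)

lemma dxn_partials: "dxn i f = partials (replicate i False) f"
  by (induction i) (auto simp: dxn_Suc)

lemma smooth_partials: "smooth2 f \<Longrightarrow> smooth2 (partials ops f)"
  unfolding smooth2_def by (simp add: partials_append)

lemma smooth_dx: "smooth2 f \<Longrightarrow> smooth2 (dx f)"
  using smooth_partials[of f "[False]"] by simp

lemma smooth_dt: "smooth2 f \<Longrightarrow> smooth2 (dt f)"
  using smooth_partials[of f "[True]"] by simp

lemma smooth_dxn: "smooth2 f \<Longrightarrow> smooth2 (dxn i f)"
  by (simp add: dxn_partials smooth_partials)

lemma smooth_diff: "smooth2 f \<Longrightarrow> f differentiable (at z)"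
  unfolding smooth2_def using partials.simps(1) by metis

lemma has_dx: assumes "smooth2 h"
  shows "((\<lambda>y. h(t,y)) has_real_derivative dx h (t,y)) (at y)"
proof -
  have "(\<lambda>y. (t,y)) differentiable (at y)"
    by (auto intro!: derivative_intros simp: differentiable_def)
  then have "(\<lambda>y. h(t,y)) differentiable (at y)"
    using differentiable_compose[OF smooth_diff[OF assms]] by blast
  then show ?thesis by (simp add: dx_def DERIV_deriv_iff_real_differentiable[symmetric])
qed

lemma has_dt: assumes "smooth2 h"
  shows "((\<lambda>s. h(s,y)) has_real_derivative dt h (s,y)) (at s)"
proof -
  have "(\<lambda>s. (s,y)) differentiable (at s)"
    by (auto intro!: derivative_intros simp: differentiable_def)
  then have "(\<lambda>s. h(s,y)) differentiable (at s)"
    using differentiable_compose[OF smooth_diff[OF assms]] by blast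
  then show ?thesis by (simp add: dt_def DERIV_deriv_iff_real_differentiable[symmetric])
qed

lemma dt_dx: assumes "smooth2 h" shows "dt (dx h) = dx (dt h)"
proof
  fix z :: "real \<times> real"
  obtain t0 x0 where z: "z = (t0, x0)" by (cases z)
  have c: "continuous_on UNIV (dx (dt h))"
    using smooth_diff[OF smooth_dx[OF smooth_dt[OF assms]]]
    by (intro differentiable_imp_continuous_on) (auto simp: differentiable_on_def intro: differentiable_at_withinI)
  show "dt (dx h) z = dx (dt h) z" unfolding z
    by (rule clairaut[where g=h and gx="dx h" and gt="dt h"])
      (auto intro: has_dx has_dt smooth_dx smooth_dt assms c)
qed

lemma dx_neg: assumes "smooth2 h" shows "dx (\<lambda>z. - h z) = (\<lambda>z. - dx h z)"
proof
  fix z :: "real \<times> real"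
  obtain t0 x0 where z: "z = (t0, x0)" by (cases z)
  show "dx (\<lambda>z. - h z) z = - dx h z" unfolding z
    using DERIV_imp_deriv[OF DERIV_minus[OF has_dx[OF assms, of t0 x0]]]
    by (simp add: dx_def)
qed

lemma dt_dxn: assumes "smooth2 f" and heat: "\<And>z. dt f z + dxn 2 f z = 0"
  shows "dt (dxn i f) = (\<lambda>z. - dxn (Suc (Suc i)) f z)"
proof (induction i)
  case 0
  show ?case using heat by (auto simp: eq_neg_iff_add_eq_0 numeral_2_eq_2)
next
  case (Suc i)
  have "dt (dxn (Suc i) f) = dx (dt (dxn i f))"
    by (simp add: dxn_Suc dt_dx smooth_dxn assms)
  also have "\<dots> = dx (\<lambda>z. - dxn (Suc (Suc i)) f z)" using Suc by simp
  also have "\<dots> = (\<lambda>z. - dxn (Suc (Suc (Suc i))) f z)"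
    by (subst dx_neg[OF smooth_dxn[OF assms(1)]]) (simp add: dxn_Suc)
  finally show ?case .
qed

lemma term_deriv:
  fixes a1 b1 a2 b2 :: "real \<Rightarrow> real"
  assumes "DERIV a1 y :> a1'" "DERIV b1 y :> b1'" "DERIV a2 y :> a2'" "DERIV b2 y :> b2'"
  shows "DERIV (\<lambda>y. a1 y * b2 y - a2 y * b1 y) y :> a1'*b2 y + a1 y*b2' - (a2'*b1 y + a2 y * b1')"
  using DERIV_diff[OF DERIV_mult[OF assms(1) assms(4)] DERIV_mult[OF assms(3) assms(2)]] by (simp add: mult.commute)


theorem lemma5:
  fixes \<alpha> \<beta> :: "nat \<Rightarrow> real \<times> real \<Rightarrow> real" and p :: nat
  assumes smooth: "\<And>s. s \<in> {1..p} \<Longrightarrow> smooth2 (\<alpha> s) \<and> smooth2 (\<beta> s)"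
    and heat_\<alpha>: "\<And>s z. s \<in> {1..p} \<Longrightarrow> dt (\<alpha> s) z + dxn 2 (\<alpha> s) z = 0"
    and heat_\<beta>: "\<And>s z. s \<in> {1..p} \<Longrightarrow> dt (\<beta> s) z + dxn 2 (\<beta> s) z = 0"
    and wronsk: "\<And>z. (\<Sum>s=1..p. dx (\<alpha> s) z * \<beta> s z - \<alpha> s z * dx (\<beta> s) z) = 0"
  shows "\<forall>i j z. (\<Sum>s=1..p. dxn i (\<alpha> s) z * dxn j (\<beta> s) z
                          - dxn j (\<alpha> s) z * dxn i (\<beta> s) z) = 0"
proof -
  define W where "W = (\<lambda>i j z. (\<Sum>s=1..p. dxn i (\<alpha> s) z * dxn j (\<beta> s) z
                          - dxn j (\<alpha> s) z * dxn i (\<beta> s) z))"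
  have Dx: "((\<lambda>y. W i j (t,y)) has_real_derivative W (Suc i) j (t,y) + W i (Suc j) (t,y)) (at y)"
    for i j t y
  proof -
    have "((\<lambda>y. W i j (t,y)) has_real_derivative
      (\<Sum>s=1..p. dxn (Suc i) (\<alpha> s) (t,y) * dxn j (\<beta> s) (t,y) + dxn i (\<alpha> s) (t,y) * dxn (Suc j) (\<beta> s) (t,y)
         - (dxn (Suc j) (\<alpha> s) (t,y) * dxn i (\<beta> s) (t,y) + dxn j (\<alpha> s) (t,y) * dxn (Suc i) (\<beta> s) (t,y)))) (at y)"
      unfolding W_def
      by (intro DERIV_sum term_deriv) (auto simp: dxn_Suc smooth intro!: has_dx smooth_dxn)
    then show ?thesis
      by (rule DERIV_cong) (simp add: W_def sum.distrib[symmetric] algebra_simps)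
  qed
  have Dt: "((\<lambda>t. W i j (t,y)) has_real_derivative - (W (Suc (Suc i)) j (t,y) + W i (Suc (Suc j)) (t,y))) (at t)"
    for i j t y
  proof -
    have dta: "dt (dxn k (\<alpha> s)) = (\<lambda>z. - dxn (Suc (Suc k)) (\<alpha> s) z)" if "s \<in> {1..p}" for k s
      using dt_dxn[of "\<alpha> s"] smooth[OF that] heat_\<alpha>[OF that] by blast
    have dtb: "dt (dxn k (\<beta> s)) = (\<lambda>z. - dxn (Suc (Suc k)) (\<beta> s) z)" if "s \<in> {1..p}" for k s
      using dt_dxn[of "\<beta> s"] smooth[OF that] heat_\<beta>[OF that] by blast
    have ha: "((\<lambda>t. dxn k (\<alpha> s) (t,y)) has_real_derivative - dxn (Suc (Suc k)) (\<alpha> s) (t,y)) (at t)"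
      if "s \<in> {1..p}" for k s
      using has_dt[OF smooth_dxn, of "\<alpha> s" k y t] smooth[OF that] dta[OF that, of k] by simp
    have hb: "((\<lambda>t. dxn k (\<beta> s) (t,y)) has_real_derivative - dxn (Suc (Suc k)) (\<beta> s) (t,y)) (at t)"
      if "s \<in> {1..p}" for k s
      using has_dt[OF smooth_dxn, of "\<beta> s" k y t] smooth[OF that] dtb[OF that, of k] by simp
    have "((\<lambda>t. W i j (t,y)) has_real_derivative
      (\<Sum>s=1..p. (- dxn (Suc (Suc i)) (\<alpha> s) (t,y)) * dxn j (\<beta> s) (t,y) + dxn i (\<alpha> s) (t,y) * (- dxn (Suc (Suc j)) (\<beta> s) (t,y))
         - ((- dxn (Suc (Suc j)) (\<alpha> s) (t,y)) * dxn i (\<beta> s) (t,y) + dxn j (\<alpha> s) (t,y) * (- dxn (Suc (Suc i)) (\<beta> s) (t,y))))) (at t)"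
      unfolding W_def
      by (intro DERIV_sum term_deriv ha hb) auto
    then show ?thesis
      by (rule DERIV_cong) (simp add: W_def sum.distrib[symmetric] sum_negf[symmetric] algebra_simps)
  qed
  have X: "W (Suc i) j z + W i (Suc j) z = 0" if "\<forall>z. W i j z = 0" for i j z
  proof -
    obtain t y where z: "z = (t,y)" by (cases z)
    have "((\<lambda>y. W i j (t,y)) has_real_derivative 0) (at y)" using that by simp
    then show ?thesis using Dx[of i j t y] z by (metis DERIV_unique)
  qed
  have T: "W (Suc (Suc i)) j z + W i (Suc (Suc j)) z = 0" if "\<forall>z. W i j z = 0" for i j z
  proof -
    obtain t y where z: "z = (t,y)" by (cases z)
    have "((\<lambda>t. W i j (t,y)) has_real_derivative 0) (at t)" using that by simp
    then show ?thesis using Dt[of i j y t] z by (metis DERIV_unique neg_equal_0_iff_equal)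
  qed
  have anti: "W i j z = - W j i z" for i j z
    unfolding W_def by (simp add: sum_negf[symmetric] algebra_simps)
  have main: "\<forall>i j. i + j = n \<longrightarrow> (\<forall>z. W i j z = 0)" for n
  proof (induction n rule: less_induct)
    case (less n)
    consider "n = 0" | "n = 1" | "n \<ge> 2" by linarith
    then show ?case
    proof cases
      case 1
      then show ?thesis by (simp add: W_def)
    next
      case 2
      have w10: "W 1 0 z = 0" for z using wronsk[of z] by (simp add: W_def dxn_Suc)
      show ?thesis
      proof (intro allI impI)
        fix i j z assume "i + j = n"
        then have "(i = 1 \<and> j = 0) \<or> (i = 0 \<and> j = 1)" using 2 by auto
        then show "W i j z = 0" using w10[of z] anti[of 0 1 z] by auto
      qed
    next
      case 3
      show ?thesis
      proof (intro allI impI)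
        fix i j z assume ij: "i + j = n"
        have IH1: "\<forall>z. W a b z = 0" if "a + b = n - 1" for a b
          using less.IH[of "n-1"] that 3 by auto
        have IH2: "\<forall>z. W a b z = 0" if "a + b = n - 2" for a b
          using less.IH[of "n-2"] that 3 by auto
        have n2: "n = Suc (Suc (n-2))" "n - 1 = Suc (n - 2)" using 3 by auto
        have e1: "W n 0 z + W (n-2) 2 z = 0"
          using T[OF IH2[of "n-2" 0], of z] n2 by (simp add: numeral_2_eq_2)
        have e2: "W n 0 z + W (n-1) 1 z = 0"
          using X[OF IH1[of "n-1" 0], of z] n2 by simp
        have e3: "W (n-1) 1 z + W (n-2) 2 z = 0"
          using X[OF IH1[of "n-2" 1], of z] n2 by (simp add: numeral_2_eq_2)
        have c0: "W n 0 z = 0" using e1 e2 e3 by linarith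
        have "k \<le> n \<longrightarrow> W (n-k) k z = 0" for k
        proof (induction k)
          case 0 then show ?case using c0 by simp
        next
          case (Suc k)
          show ?case
          proof
            assume k: "Suc k \<le> n"
            have "W (Suc (n - Suc k)) k z + W (n - Suc k) (Suc k) z = 0"
              using X[OF IH1[of "n - Suc k" k], of z] k by simp
            moreover have "Suc (n - Suc k) = n - k" using k by simp
            ultimately show "W (n - Suc k) (Suc k) z = 0" using Suc k by simp
          qed
        qed
        then show "W i j z = 0" using ij by (metis add_diff_cancel_right' le_add2)
      qed
    qed
  qed
  show ?thesis using main unfolding W_def by blast
qed

end
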